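(* Assume the Continuum Hypothesis. Then there exists a topological space $X$ such that \textsc{Bob} has a winning strategy in $\mathsf{BM}_\omega(X)$ but \textsc{Bob} has no winning strategy in $\mathsf{BM}_\mathrm{fin}(X)$.
   Context: The game $\mathsf{BM}_\mathrm{fin}(X)$: \textsc{Alice} plays a non-empty open set $A_0$; \textsc{Bob} plays a finite collection $\mathcal{B}_0$ of non-empty open subsets of $A_0$; in inning $n+1$, for each $B \in \mathcal{B}_n$ \textsc{Alice} plays a non-empty open set $A_B \subseteq B$, letting $\mathcal{A}_{n+1}=\{A_B : B\in\mathcal{B}_n\}$, and \textsc{Bob} plays a finite collection $\mathcal{B}_{n+1}$ of non-empty open subsets of $\bigcup\mathcal{A}_{n+1}$; \textsc{Bob} wins if $\bigcap_{n}\bigcup\mathcal{B}_n\neq\emptyset$, otherwise \textsc{Alice} wins. The game $\mathsf{BM}_\omega(X)$ is defined identically except that each collection $\mathcal{B}_n$ played by \textsc{Bob} is countable instead of finite. *)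

theory Defs
  imports "HOL-Analysis.Analysis" "HOL-Library.Equipollence"
begin

definition continuum_hypothesis :: bool where
  "continuum_hypothesis \<longleftrightarrow>
     (\<forall>A :: real set. countable A \<or> A \<approx> (UNIV :: real set))"

definition BM_bob_legal ::
  "'a topology \<Rightarrow> ('a set set \<Rightarrow> bool) \<Rightarrow> 'a set \<Rightarrow> 'a set set \<Rightarrow> bool" where
  "BM_bob_legal X P U \<B> \<longleftrightarrow> P \<B> \<and> (\<forall>B\<in>\<B>. openin X B \<and> B \<noteq> {} \<and> B \<subseteq> U)"

definition BM_alice_legal ::
  "'a topology \<Rightarrow> 'a set set \<Rightarrow> ('a set \<Rightarrow> 'a set) \<Rightarrow> bool" where
  "BM_alice_legal X \<B> g \<longleftrightarrow> (\<forall>B\<in>\<B>. openin X (g B) \<and> g B \<noteq> {} \<and> g B \<subseteq> B)"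

text \<open>A strategy for Bob maps Alice's first move A0 and the list of her subsequent
  moves to Bob's next collection.  Bob's n-th collection in the play where Alice plays
  A0 and then f 0, f 1, ... (f k being her move in inning k+1):\<close>
definition BM_bob_move ::
  "('a set \<Rightarrow> ('a set \<Rightarrow> 'a set) list \<Rightarrow> 'a set set) \<Rightarrow> 'a set \<Rightarrow> (nat \<Rightarrow> 'a set \<Rightarrow> 'a set) \<Rightarrow> nat \<Rightarrow> 'a set set" where
  "BM_bob_move \<sigma> A0 f n = \<sigma> A0 (map f [0..<n])"

definition BM_bob_winning_strategy ::
  "'a topology \<Rightarrow> ('a set set \<Rightarrow> bool) \<Rightarrow> ('a set \<Rightarrow> ('a set \<Rightarrow> 'a set) list \<Rightarrow> 'a set set) \<Rightarrow> bool" where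
  "BM_bob_winning_strategy X P \<sigma> \<longleftrightarrow>
     (\<forall>A0 f. openin X A0 \<and> A0 \<noteq> {} \<longrightarrow>
        BM_bob_legal X P A0 (BM_bob_move \<sigma> A0 f 0)
      \<and> (\<forall>n. (\<forall>k\<le>n. BM_alice_legal X (BM_bob_move \<sigma> A0 f k) (f k)) \<longrightarrow>
              BM_bob_legal X P (\<Union> (f n ` BM_bob_move \<sigma> A0 f n)) (BM_bob_move \<sigma> A0 f (Suc n)))
      \<and> ((\<forall>n. BM_alice_legal X (BM_bob_move \<sigma> A0 f n) (f n)) \<longrightarrow>
              (\<Inter>n. \<Union> (BM_bob_move \<sigma> A0 f n)) \<noteq> {}))"

definition BM_bob_has_winning_strategy :: "'a topology \<Rightarrow> ('a set set \<Rightarrow> bool) \<Rightarrow> bool" where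
  "BM_bob_has_winning_strategy X P \<longleftrightarrow> (\<exists>\<sigma>. BM_bob_winning_strategy X P \<sigma>)"

abbreviation bob_wins_BM_fin :: "'a topology \<Rightarrow> bool" where
  "bob_wins_BM_fin X \<equiv> BM_bob_has_winning_strategy X finite"

abbreviation bob_wins_BM_omega :: "'a topology \<Rightarrow> bool" where
  "bob_wins_BM_omega X \<equiv> BM_bob_has_winning_strategy X countable"

end

theory Submission
  imports Defs
begin


lemma CH_countable_underS:
  assumes CH: "continuum_hypothesis"
  shows "countable (underS (card_of (UNIV::real set)) a)"
proof -
  let ?W = "card_of (UNIV::real set)"
  have "(card_of (underS ?W a), ?W) \<in> ordLess"
    using card_of_underS[OF card_of_Card_order, of a] by (simp add: Field_card_of)
  hence "\<not> (card_of (underS ?W a), card_of (UNIV::real set)) \<in> ordIso"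
    by (rule not_ordLess_ordIso)
  hence "\<not> (underS ?W a \<approx> (UNIV::real set))"
    unfolding eqpoll_iff_card_of_ordIso by simp
  thus ?thesis using CH unfolding continuum_hypothesis_def by blast
qed

lemma W_total:
  fixes a c :: real
  assumes "c \<notin> underS (card_of (UNIV::real set)) a"
  shows "a \<in> under (card_of (UNIV::real set)) c"
proof -
  let ?W = "card_of (UNIV::real set)"
  have wo: "well_order_on UNIV ?W" using card_of_Well_order[of "UNIV::real set"]
    by (simp add: Field_card_of)
  hence tot: "total_on UNIV ?W" and rf: "refl_on UNIV ?W"
    unfolding well_order_on_def linear_order_on_def partial_order_on_def preorder_on_def by auto
  show ?thesis
  proof (cases "a = c")
    case True thus ?thesis using rf unfolding under_def refl_on_def by auto
  next
    case False
    with assms have "(c,a) \<notin> ?W" unfolding underS_def by auto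
    with tot False have "(a,c) \<in> ?W" unfolding total_on_def by auto
    thus ?thesis unfolding under_def by auto
  qed
qed

lemma CH_countable_under:
  assumes CH: "continuum_hypothesis"
  shows "countable (under (card_of (UNIV::real set)) a)"
proof -
  let ?W = "card_of (UNIV::real set)"
  have "under ?W a \<subseteq> insert a (underS ?W a)" unfolding under_def underS_def by auto
  moreover have "countable (insert a (underS ?W a))" using CH_countable_underS[OF CH] by simp
  ultimately show ?thesis by (rule countable_subset)
qed

lemma CH_bound:
  assumes CH: "continuum_hypothesis" and C: "countable C" and Z: "uncountable (Z::real set)"
  shows "\<exists>a\<in>Z. C \<subseteq> underS (card_of (UNIV::real set)) a"
proof (rule ccontr)
  let ?W = "card_of (UNIV::real set)"
  assume "\<not> ?thesis"
  hence "Z \<subseteq> (\<Union>c\<in>C. under ?W c)" using W_total by blast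
  moreover have "countable (\<Union>c\<in>C. under ?W c)"
    using C CH_countable_under[OF CH] by auto
  ultimately have "countable Z" by (rule countable_subset)
  thus False using Z by simp
qed

lemma baire_real:
  fixes U :: "real set"
  assumes "open U" "U \<noteq> {}" "countable G" "\<And>F. F \<in> G \<Longrightarrow> closed F \<and> interior F = {}"
  shows "\<not> U \<subseteq> \<Union>G"
proof
  assume "U \<subseteq> \<Union>G"
  have "euclidean interior_of \<Union>G = {}"
    by (rule Baire_category_alt) (use assms completely_metrizable_space_euclidean in auto)
  hence "interior (\<Union>G) = {}" by simp
  with \<open>U \<subseteq> \<Union>G\<close> assms(1,2) show False
    by (metis interior_maximal subset_empty)
qed



lemma luzin_exists:
  assumes CH: "continuum_hypothesis"
  shows "\<exists>L::real set. (\<forall>F. closed F \<and> interior F = {} \<longrightarrow> countable (L \<inter> F))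
                     \<and> (\<forall>U. open U \<and> U \<noteq> {} \<longrightarrow> uncountable (L \<inter> U))"
proof -
  let ?W = "card_of (UNIV::real set)"
  obtain h :: "nat set \<Rightarrow> real" where h: "bij h"
    using nat_sets_eqpoll_reals unfolding eqpoll_def by blast
  define code where "code = inv h"
  have code_surj: "\<exists>r. code r = S" for S
    using inv_f_f[OF bij_is_inj[OF h]] unfolding code_def by blast
  obtain B :: "real set set" where B: "countable B" "\<And>C. C \<in> B \<Longrightarrow> open C"
      "\<And>S. open S \<Longrightarrow> \<exists>U. U \<subseteq> B \<and> S = \<Union>U"
    using univ_second_countable by blast
  have Bne: "B \<noteq> {}" using B(3)[of UNIV] by auto
  define bs where "bs = from_nat_into B"
  have rbs: "range bs = B" unfolding bs_def using Bne B(1) by (simp add: range_from_nat_into)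
  define Fc where "Fc r = - \<Union>(bs ` code r)" for r
  have Fc_surj: "\<exists>r. Fc r = F" if Fc: "closed F" for F
  proof -
    have "open (-F)" using Fc by (simp add: open_Compl)
    then obtain U where U: "U \<subseteq> B" "- F = \<Union>U" using B(3)[of "-F"] by blast
    define S where "S = {n. bs n \<in> U}"
    have "bs ` S = U" using U(1) rbs unfolding S_def by auto
    obtain r where "code r = S" using code_surj by blast
    hence "Fc r = - (- F)" unfolding Fc_def using \<open>bs ` S = U\<close> U(2) by simp
    thus ?thesis by auto
  qed
  define Fnd where "Fnd r = (if closed (Fc r) \<and> interior (Fc r) = {} then Fc r else {})" for r
  have Fnd_ok: "closed (Fnd r) \<and> interior (Fnd r) = {}" for r unfolding Fnd_def by auto
  have Fnd_surj: "\<exists>r. Fnd r = F" if Fh: "closed F" "interior F = {}" for F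
  proof -
    obtain r where "Fc r = F" using Fc_surj[OF Fh(1)] by blast
    hence "Fnd r = F" unfolding Fnd_def using Fh by simp
    thus ?thesis by blast
  qed
  define B' where "B' = B - {{}}"
  have B'ne: "B' \<noteq> {}"
  proof -
    obtain U where U: "U \<subseteq> B" "(UNIV::real set) = \<Union>U" using B(3)[of UNIV] by blast
    then obtain C where "C \<in> U" "(0::real) \<in> C" by (metis UnionE UNIV_I)
    hence "C \<in> B'" using U(1) unfolding B'_def by blast
    thus ?thesis by blast
  qed
  define J where "J = from_nat_into B'"
  have JB: "J k \<in> B'" for k unfolding J_def by (rule from_nat_into[OF B'ne])
  have J_ne: "J k \<noteq> {}" and J_open: "open (J k)" for k
    using JB[of k] B(2)[of "J k"] unfolding B'_def by blast+
  have J_sub: "\<exists>k. J k \<subseteq> U" if Uo: "open U" "U \<noteq> {}" for U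
  proof -
    obtain V where V: "V \<subseteq> B" "U = \<Union>V" using B(3)[OF Uo(1)] by (elim exE conjE)
    then obtain C where C: "C \<in> V" "C \<noteq> {}" using Uo(2) by blast
    hence "C \<in> B'" using V(1) unfolding B'_def by blast
    moreover have "countable B'" using B(1) unfolding B'_def by simp
    ultimately have "C \<in> range J" unfolding J_def using range_from_nat_into[OF B'ne] by simp
    then obtain k where "C = J k" by blast
    moreover have "C \<subseteq> U" using C(1) V(2) by blast
    ultimately show ?thesis by blast
  qed
  define kk :: "real \<Rightarrow> nat" where "kk r = nat \<lfloor>\<bar>r\<bar>\<rfloor>" for r
  have fib: "uncountable {r. kk r = k}" for k
  proof -
    have "{real k..<real k + 1} \<subseteq> {r. kk r = k}"
    proof
      fix r assume "r \<in> {real k..<real k + 1}"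
      hence "\<lfloor>\<bar>r\<bar>\<rfloor> = int k" by (simp add: floor_eq_iff)
      thus "r \<in> {r. kk r = k}" unfolding kk_def by simp
    qed
    moreover have "uncountable {real k..<real k + 1}"
      using uncountable_half_open_interval_1 by simp
    ultimately show ?thesis by (meson countable_subset)
  qed
  have ex: "\<exists>y. y \<in> J (kk r) \<and> (\<forall>t\<in>underS ?W r. y \<notin> Fnd t)" for r
  proof -
    have "\<not> J (kk r) \<subseteq> \<Union>(Fnd ` underS ?W r)"
    proof (rule baire_real)
      show "countable (Fnd ` underS ?W r)" using CH_countable_underS[OF CH] by (rule countable_image)
    qed (use J_open J_ne Fnd_ok in blast)+
    thus ?thesis by blast
  qed
  define x where "x r = (SOME y. y \<in> J (kk r) \<and> (\<forall>t\<in>underS ?W r. y \<notin> Fnd t))" for r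
  have x: "x r \<in> J (kk r)" "\<And>t. t \<in> underS ?W r \<Longrightarrow> x r \<notin> Fnd t" for r
    using someI_ex[OF ex[of r]] unfolding x_def by auto
  define L where "L = range x"
  have P1: "countable (L \<inter> F)" if Fc: "closed F" "interior F = {}" for F
  proof -
    obtain t0 where t0: "Fnd t0 = F" using Fnd_surj[OF Fc] by blast
    have "L \<inter> F \<subseteq> x ` under ?W t0"
    proof
      fix y assume "y \<in> L \<inter> F"
      then obtain r where r: "y = x r" "x r \<in> F" unfolding L_def by auto
      hence "t0 \<notin> underS ?W r" using x(2)[of t0 r] t0 by auto
      hence "r \<in> under ?W t0" by (rule W_total)
      thus "y \<in> x ` under ?W t0" using r by auto
    qed
    moreover have "countable (x ` under ?W t0)" using CH_countable_under[OF CH] by (rule countable_image)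
    ultimately show ?thesis by (rule countable_subset)
  qed
  have P2: "uncountable (L \<inter> U)" if Uo: "open U" "U \<noteq> {}" for U
  proof
    assume cU: "countable (L \<inter> U)"
    obtain k where k: "J k \<subseteq> U" using J_sub[OF Uo] by blast
    define D where "D = L \<inter> J k"
    have "D \<subseteq> L \<inter> U" using k unfolding D_def by blast
    hence cD: "countable D" using cU by (rule countable_subset)
    define tag where "tag y = (SOME t. Fnd t = {y})" for y
    have tag: "Fnd (tag y) = {y}" for y
      unfolding tag_def by (rule someI_ex) (rule Fnd_surj; simp)
    obtain a where a: "kk a = k" "tag ` D \<subseteq> underS ?W a"
      using CH_bound[OF CH countable_image[OF cD] fib[of k]] by blast
    have "x a \<in> D" using x(1)[of a] a(1) unfolding D_def L_def by auto
    hence "tag (x a) \<in> underS ?W a" using a(2) by auto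
    hence "x a \<notin> Fnd (tag (x a))" by (rule x(2))
    thus False using tag by auto
  qed
  show ?thesis using P1 P2 by blast
qed



definition ee :: "real \<Rightarrow> real set set" where "ee x = {{x}}"

lemma inj_ee: "inj ee" unfolding ee_def inj_def by auto

definition TT :: "real set \<Rightarrow> real set set topology" where
  "TT L = topology (\<lambda>S. \<exists>U. open U \<and> S = ee ` (U \<inter> L))"

lemma istop_TT: "istopology (\<lambda>S. \<exists>U. open U \<and> S = ee ` (U \<inter> (L::real set)))"
  unfolding istopology_def
proof (intro conjI allI impI)
  fix S T assume "\<exists>U. open U \<and> S = ee ` (U \<inter> L)" "\<exists>U. open U \<and> T = ee ` (U \<inter> L)"
  then obtain U V where UV: "open U" "S = ee ` (U \<inter> L)" "open V" "T = ee ` (V \<inter> L)" by blast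
  have "S \<inter> T = ee ` ((U \<inter> V) \<inter> L)"
    using UV(2,4) image_Int[OF inj_ee, of "U \<inter> L" "V \<inter> L"] by (simp add: Int_ac)
  thus "\<exists>W. open W \<and> S \<inter> T = ee ` (W \<inter> L)" using UV(1,3) by blast
next
  fix K assume K: "\<forall>S\<in>K. \<exists>U. open U \<and> S = ee ` (U \<inter> L)"
  define UU where "UU S = (SOME U. open U \<and> S = ee ` (U \<inter> L))" for S
  have UU: "open (UU S) \<and> S = ee ` (UU S \<inter> L)" if "S \<in> K" for S
    unfolding UU_def by (rule someI_ex) (use K that in blast)
  have "\<Union>K = ee ` ((\<Union>S\<in>K. UU S) \<inter> L)"
  proof
    show "\<Union>K \<subseteq> ee ` ((\<Union>S\<in>K. UU S) \<inter> L)"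
    proof
      fix p assume "p \<in> \<Union>K"
      then obtain S where S: "S \<in> K" "p \<in> S" by blast
      then obtain y where "y \<in> UU S \<inter> L" "p = ee y" using UU[OF S(1)] by blast
      thus "p \<in> ee ` ((\<Union>S\<in>K. UU S) \<inter> L)" using S(1) by blast
    qed
  next
    show "ee ` ((\<Union>S\<in>K. UU S) \<inter> L) \<subseteq> \<Union>K"
    proof
      fix p assume "p \<in> ee ` ((\<Union>S\<in>K. UU S) \<inter> L)"
      then obtain y S where yS: "S \<in> K" "y \<in> UU S" "y \<in> L" "p = ee y" by blast
      hence "p \<in> S" using UU[OF yS(1)] by blast
      thus "p \<in> \<Union>K" using yS(1) by blast
    qed
  qed
  moreover have "open (\<Union>S\<in>K. UU S)" using UU by blast
  ultimately show "\<exists>U. open U \<and> \<Union>K = ee ` (U \<inter> L)" by blast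
qed

lemma openin_TT: "openin (TT L) S \<longleftrightarrow> (\<exists>U. open U \<and> S = ee ` (U \<inter> L))"
  unfolding TT_def using topology_inverse'[OF istop_TT] by simp

lemma openin_TT_I: "open U \<Longrightarrow> openin (TT L) (ee ` (U \<inter> L))"
  unfolding openin_TT by blast

lemma ee_image_eq: "ee ` A = ee ` B \<longleftrightarrow> A = B"
  using inj_ee by (simp add: inj_image_eq_iff)

lemma ee_in_image: "ee y \<in> ee ` A \<longleftrightarrow> y \<in> A"
  using inj_ee by (simp add: inj_image_mem_iff)



locale luzin =
  fixes L :: "real set"
  assumes luz1: "\<And>F. closed F \<Longrightarrow> interior F = {} \<Longrightarrow> countable (L \<inter> F)"
  and luz2: "\<And>U. open U \<Longrightarrow> U \<noteq> {} \<Longrightarrow> uncountable (L \<inter> U)"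
begin

lemma L_meets: "open U \<Longrightarrow> U \<noteq> {} \<Longrightarrow> L \<inter> U \<noteq> {}"
proof
  assume "open U" "U \<noteq> {}" "L \<inter> U = {}"
  hence "countable (L \<inter> U)" by simp
  thus False using luz2 \<open>open U\<close> \<open>U \<noteq> {}\<close> by blast
qed

lemma L_meets_other: "open U \<Longrightarrow> U \<noteq> {} \<Longrightarrow> \<exists>y\<in>L \<inter> U. y \<noteq> a"
proof (rule ccontr)
  assume "open U" "U \<noteq> {}" "\<not> (\<exists>y\<in>L \<inter> U. y \<noteq> a)"
  hence "L \<inter> U \<subseteq> {a}" by blast
  moreover have "countable {a}" by simp
  ultimately have "countable (L \<inter> U)" by (rule countable_subset)
  thus False using luz2 \<open>open U\<close> \<open>U \<noteq> {}\<close> by blast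
qed

end

definition RB :: "real set set" where
  "RB = (SOME B. countable B \<and> (\<forall>C\<in>B. open C) \<and> (\<forall>S. open S \<longrightarrow> (\<exists>U. U \<subseteq> B \<and> S = \<Union>U)))"

lemma RB: "countable RB" "\<And>C. C \<in> RB \<Longrightarrow> open C" "\<And>S. open S \<Longrightarrow> \<exists>U. U \<subseteq> RB \<and> S = \<Union>U"
proof -
  have "\<exists>B::real set set. countable B \<and> (\<forall>C\<in>B. open C) \<and> (\<forall>S. open S \<longrightarrow> (\<exists>U. U \<subseteq> B \<and> S = \<Union>U))"
    using univ_second_countable by metis
  hence "countable RB \<and> (\<forall>C\<in>RB. open C) \<and> (\<forall>S. open S \<longrightarrow> (\<exists>U. U \<subseteq> RB \<and> S = \<Union>U))"
    unfolding RB_def by (rule someI_ex)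
  thus "countable RB" "\<And>C. C \<in> RB \<Longrightarrow> open C" "\<And>S. open S \<Longrightarrow> \<exists>U. U \<subseteq> RB \<and> S = \<Union>U"
    by blast+
qed

definition Pb :: "real set \<Rightarrow> real set set set \<Rightarrow> real set set set set" where
  "Pb L U = {S. \<exists>C\<in>RB. S = ee ` (C \<inter> L) \<and> S \<noteq> {} \<and> S \<subseteq> U}"

primrec sq :: "real set \<Rightarrow> real set set set \<Rightarrow> (nat \<Rightarrow> real set set set \<Rightarrow> real set set set) \<Rightarrow> nat \<Rightarrow> real set set set set" where
  "sq L A0 g 0 = Pb L A0"
| "sq L A0 g (Suc n) = Pb L (\<Union>(g n ` sq L A0 g n))"

definition sigw :: "real set \<Rightarrow> real set set set \<Rightarrow> (real set set set \<Rightarrow> real set set set) list \<Rightarrow> real set set set set" where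
  "sigw L A0 fs = sq L A0 (\<lambda>k. fs ! k) (length fs)"

lemma sq_cong: "(\<And>k. k < n \<Longrightarrow> g k = g' k) \<Longrightarrow> sq L A0 g n = sq L A0 g' n"
  by (induction n) auto

lemma sigw_move: "BM_bob_move (sigw L) A0 f n = sq L A0 f n"
proof -
  have "sq L A0 ((!) (map f [0..<n])) n = sq L A0 f n" by (rule sq_cong) simp
  thus ?thesis unfolding BM_bob_move_def sigw_def by simp
qed

lemma Pb_countable: "countable (Pb L U)"
proof -
  have "Pb L U \<subseteq> (\<lambda>C. ee ` (C \<inter> L)) ` RB" unfolding Pb_def by blast
  moreover have "countable ((\<lambda>C. ee ` (C \<inter> L)) ` RB)" using RB(1) by (rule countable_image)
  ultimately show ?thesis by (rule countable_subset)
qed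

lemma Pb_legal: "BM_bob_legal (TT L) countable U (Pb L U)"
  unfolding BM_bob_legal_def
proof (intro conjI ballI)
  show "countable (Pb L U)" by (rule Pb_countable)
  fix B assume "B \<in> Pb L U"
  then obtain C where C: "C \<in> RB" "B = ee ` (C \<inter> L)" "B \<noteq> {}" "B \<subseteq> U" unfolding Pb_def by blast
  show "openin (TT L) B" unfolding C(2) by (rule openin_TT_I[OF RB(2)[OF C(1)]])
  show "B \<noteq> {}" "B \<subseteq> U" using C by blast+
qed

lemma Pb_cover:
  assumes "openin (TT L) V" "p \<in> V"
  shows "\<exists>S\<in>Pb L V. p \<in> S"
proof -
  obtain U where U: "open U" "V = ee ` (U \<inter> L)" using assms(1) unfolding openin_TT by blast
  then obtain y where y: "y \<in> U" "y \<in> L" "p = ee y" using assms(2) by blast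
  obtain W where W: "W \<subseteq> RB" "U = \<Union>W" using RB(3)[OF U(1)] by blast
  then obtain C where C: "C \<in> W" "y \<in> C" using y(1) by blast
  define S where "S = ee ` (C \<inter> L)"
  have "p \<in> S" unfolding S_def using C y by blast
  moreover have "S \<subseteq> V" unfolding S_def U(2) using C W by blast
  ultimately have "S \<in> Pb L V" unfolding Pb_def S_def using C W by blast
  thus ?thesis using \<open>p \<in> S\<close> by blast
qed

lemma Pb_sub: "S \<in> Pb L V \<Longrightarrow> S \<subseteq> V"
  unfolding Pb_def by blast

lemma Pb_Union: "openin (TT L) V \<Longrightarrow> \<Union>(Pb L V) = V"
proof
  show "\<Union>(Pb L V) \<subseteq> V" using Pb_sub by blast
  assume "openin (TT L) V"
  thus "V \<subseteq> \<Union>(Pb L V)" using Pb_cover[of L V] by blast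
qed

lemma (in luzin) omega_win: "BM_bob_winning_strategy (TT L) countable (sigw L)"
  unfolding BM_bob_winning_strategy_def sigw_move
proof (rule allI, rule allI, rule impI, intro conjI)
  fix A0 f
  assume A0: "openin (TT L) A0 \<and> A0 \<noteq> {}"
  show "BM_bob_legal (TT L) countable A0 (sq L A0 f 0)" using Pb_legal by simp
  show "\<forall>n. (\<forall>k\<le>n. BM_alice_legal (TT L) (sq L A0 f k) (f k)) \<longrightarrow>
          BM_bob_legal (TT L) countable (\<Union> (f n ` sq L A0 f n)) (sq L A0 f (Suc n))"
    using Pb_legal by simp
  show "(\<forall>n. BM_alice_legal (TT L) (sq L A0 f n) (f n)) \<longrightarrow> (\<Inter>n. \<Union> (sq L A0 f n)) \<noteq> {}"
  proof
    assume AL: "\<forall>n. BM_alice_legal (TT L) (sq L A0 f n) (f n)"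
    define D where "D n = \<Union>(sq L A0 f n)" for n
    have Dn: "openin (TT L) (D n) \<and> sq L A0 f n = Pb L (D n)" for n
    proof (induction n)
      case 0
      thus ?case using A0 Pb_Union[of L A0] unfolding D_def by simp
    next
      case (Suc n)
      have "openin (TT L) (\<Union>(f n ` sq L A0 f n))"
        using AL unfolding BM_alice_legal_def by blast
      thus ?case using Pb_Union unfolding D_def by simp
    qed
    have dense: "V \<inter> D (Suc n) \<noteq> {}" if V: "openin (TT L) V" "V \<noteq> {}" "V \<subseteq> D n" for V n
    proof -
      obtain p where "p \<in> V" using V(2) by blast
      then obtain S where S: "S \<in> Pb L V" "p \<in> S" using Pb_cover V(1) by blast
      hence "S \<in> Pb L (D n)" using V(3) unfolding Pb_def by blast
      hence Ssq: "S \<in> sq L A0 f n" using Dn by simp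
      hence fS: "f n S \<noteq> {}" "f n S \<subseteq> S" using AL unfolding BM_alice_legal_def by blast+
      have Ho: "openin (TT L) (\<Union>(f n ` sq L A0 f n))"
        using AL unfolding BM_alice_legal_def by blast
      have HD: "D (Suc n) = \<Union>(f n ` sq L A0 f n)"
        unfolding D_def sq.simps using Pb_Union[OF Ho] .
      have "f n S \<subseteq> D (Suc n)" unfolding HD using Ssq by blast
      moreover have "f n S \<subseteq> V" using fS S(1) unfolding Pb_def by blast
      ultimately show ?thesis using fS(1) by blast
    qed
    obtain U where U: "open U" "A0 = ee ` (U \<inter> L)" using A0 unfolding openin_TT by blast
    have Une: "U \<noteq> {}" using A0 U by blast
    define Op where "Op n = (SOME W. open W \<and> D n = ee ` (W \<inter> L))" for n
    have Op: "open (Op n) \<and> D n = ee ` (Op n \<inter> L)" for n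
    proof -
      have "\<exists>W. open W \<and> D n = ee ` (W \<inter> L)" using Dn[of n] unfolding openin_TT by blast
      thus ?thesis unfolding Op_def by (rule someI_ex)
    qed
    have claim: "V \<inter> Op n \<inter> L \<noteq> {}" if "open V" "V \<inter> U \<noteq> {}" for V n
      using that
    proof (induction n arbitrary: V)
      case 0
      have "D 0 = A0" using Dn[of 0] Pb_Union[of L A0] A0 unfolding D_def by simp
      hence "ee ` (Op 0 \<inter> L) = ee ` (U \<inter> L)" using Op[of 0] U(2) by simp
      hence "Op 0 \<inter> L = U \<inter> L" by (simp only: ee_image_eq)
      moreover have "L \<inter> (V \<inter> U) \<noteq> {}"
        by (rule L_meets) (use 0 U(1) in auto)
      ultimately show ?case by blast
    next
      case (Suc n)
      have ne: "V \<inter> Op n \<inter> L \<noteq> {}" using Suc by blast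
      define V' where "V' = ee ` ((V \<inter> Op n) \<inter> L)"
      have "openin (TT L) V'" unfolding V'_def using Suc(2) Op[of n] by (intro openin_TT_I) blast
      moreover have "V' \<noteq> {}" using ne unfolding V'_def by blast
      moreover have "V' \<subseteq> D n" using Op[of n] unfolding V'_def by blast
      ultimately have "V' \<inter> D (Suc n) \<noteq> {}" by (rule dense)
      then obtain z where "z \<in> V" "z \<in> Op n" "z \<in> L" "ee z \<in> D (Suc n)" unfolding V'_def by blast
      hence "z \<in> Op (Suc n)" using Op[of "Suc n"] ee_in_image by blast
      thus ?case using \<open>z \<in> V\<close> \<open>z \<in> L\<close> by blast
    qed
    define F where "F n = closure U - (Op n \<inter> U)" for n
    have Fc: "closed (F n)" for n unfolding F_def
      by (intro closed_Diff closed_closure open_Int) (use Op U(1) in auto)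
    have Fi: "interior (F n) = {}" for n
    proof (rule ccontr)
      assume "interior (F n) \<noteq> {}"
      moreover have "interior (F n) \<subseteq> closure U" using interior_subset unfolding F_def by blast
      ultimately have "interior (F n) \<inter> closure U \<noteq> {}" by blast
      hence ne: "interior (F n) \<inter> U \<noteq> {}" using open_Int_closure_eq_empty[of "interior (F n)" U] by simp
      have "open (interior (F n) \<inter> U)" using U(1) by blast
      moreover have "(interior (F n) \<inter> U) \<inter> U \<noteq> {}" using ne by blast
      ultimately have "(interior (F n) \<inter> U) \<inter> Op n \<inter> L \<noteq> {}" by (rule claim)
      then obtain z where "z \<in> interior (F n)" "z \<in> U" "z \<in> Op n" by blast
      thus False using interior_subset[of "F n"] unfolding F_def by blast
    qed
    have cnt: "countable (\<Union>n. L \<inter> F n)" using luz1[OF Fc Fi] by (intro countable_UN) auto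
    have "\<not> L \<inter> U \<subseteq> (\<Union>n. L \<inter> F n)"
    proof
      assume "L \<inter> U \<subseteq> (\<Union>n. L \<inter> F n)"
      hence "countable (L \<inter> U)" using cnt by (rule countable_subset)
      thus False using luz2[OF U(1) Une] by simp
    qed
    then obtain y where y: "y \<in> L" "y \<in> U" "\<And>n. y \<notin> F n" by blast
    have "y \<in> Op n" for n using y closure_subset[of U] unfolding F_def by blast
    hence "ee y \<in> D n" for n using Op y(1) by blast
    thus "(\<Inter>n. \<Union> (sq L A0 f n)) \<noteq> {}" unfolding D_def by blast
  qed
qed



definition qq :: "nat \<Rightarrow> real" where "qq n = from_nat_into \<rat> n"

lemma range_qq: "range qq = \<rat>"
  unfolding qq_def by (rule range_from_nat_into) (use countable_rat Rats_0 in auto)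

definition ptP :: "real set \<Rightarrow> nat \<Rightarrow> real set set set \<Rightarrow> real \<times> real \<Rightarrow> bool" where
  "ptP L n S p \<longleftrightarrow> fst p \<in> L \<and> snd p > 0 \<and> snd p < dist (fst p) (qq n) \<and> ee ` (cball (fst p) (snd p) \<inter> L) \<subseteq> S"

definition pt :: "real set \<Rightarrow> nat \<Rightarrow> real set set set \<Rightarrow> real \<times> real" where
  "pt L n S = (SOME p. ptP L n S p)"

definition ctr where "ctr L n S = fst (pt L n S)"
definition rad where "rad L n S = snd (pt L n S)"

definition rr :: "real set \<Rightarrow> nat \<Rightarrow> real set set set set \<Rightarrow> real" where
  "rr L n Bf = Min (insert 1 (rad L n ` Bf \<union>
      (\<lambda>(S,S'). dist (ctr L n S) (ctr L n S') / 3) ` {(S,S'). S \<in> Bf \<and> S' \<in> Bf \<and> ctr L n S \<noteq> ctr L n S'}))"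

definition Iv :: "real set \<Rightarrow> nat \<Rightarrow> real set set set set \<Rightarrow> real set set set \<Rightarrow> bool \<Rightarrow> real set" where
  "Iv L n Bf S b = (if b then {ctr L n S + rr L n Bf / 2 .. ctr L n S + rr L n Bf}
                    else {ctr L n S - rr L n Bf .. ctr L n S - rr L n Bf / 2})"

definition Io :: "real set \<Rightarrow> nat \<Rightarrow> real set set set set \<Rightarrow> real set set set \<Rightarrow> bool \<Rightarrow> real set" where
  "Io L n Bf S b = (if b then {ctr L n S + rr L n Bf / 2 <..< ctr L n S + rr L n Bf}
                    else {ctr L n S - rr L n Bf <..< ctr L n S - rr L n Bf / 2})"

definition alice :: "real set \<Rightarrow> nat \<Rightarrow> real set set set set \<Rightarrow> bool \<Rightarrow> real set set set \<Rightarrow> real set set set" where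
  "alice L n Bf b = (\<lambda>S. ee ` (Io L n Bf S b \<inter> L))"

definition good :: "real set \<Rightarrow> real set set set set \<Rightarrow> bool" where
  "good L Bf \<longleftrightarrow> finite Bf \<and> (\<forall>S\<in>Bf. openin (TT L) S \<and> S \<noteq> {})"

lemma Io_sub_Iv: "Io L n Bf S b \<subseteq> Iv L n Bf S b"
  unfolding Io_def Iv_def by auto

lemma closed_Iv: "closed (Iv L n Bf S b)"
  unfolding Iv_def by simp

lemma (in luzin) pt_ex:
  assumes "openin (TT L) S" "S \<noteq> {}"
  shows "ptP L n S (pt L n S)"
proof -
  obtain U where U: "open U" "S = ee ` (U \<inter> L)" using assms(1) unfolding openin_TT by blast
  have "U \<noteq> {}" using U(2) assms(2) by blast
  then obtain y where y: "y \<in> L" "y \<in> U" "y \<noteq> qq n" using L_meets_other[OF U(1)] by blast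
  obtain e where e: "e > 0" "ball y e \<subseteq> U" using open_contains_ball U(1) y(2) by blast
  define \<rho> where "\<rho> = min (e/2) (dist y (qq n) / 2)"
  have d: "dist y (qq n) > 0" using y(3) by simp
  have "\<rho> \<le> dist y (qq n) / 2" unfolding \<rho>_def by simp
  hence "\<rho> < dist y (qq n)" using d by linarith
  moreover have "\<rho> > 0" unfolding \<rho>_def using e(1) d by simp
  ultimately have "\<rho> > 0" "\<rho> < dist y (qq n)" by auto
  moreover have "cball y \<rho> \<subseteq> U"
  proof
    fix z assume "z \<in> cball y \<rho>"
    hence "dist y z < e" unfolding \<rho>_def using e(1) by (simp add: mem_cball)
    thus "z \<in> U" using e(2) by (simp add: subset_iff)
  qed
  hence "ee ` (cball y \<rho> \<inter> L) \<subseteq> S" unfolding U(2) by blast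
  ultimately have "ptP L n S (y, \<rho>)" unfolding ptP_def using y(1) by simp
  thus ?thesis unfolding pt_def by (rule someI)
qed

lemma (in luzin) rad_pos: "openin (TT L) S \<Longrightarrow> S \<noteq> {} \<Longrightarrow> rad L n S > 0"
  using pt_ex unfolding ptP_def rad_def by blast

lemma rr_set_finite:
  assumes "finite Bf"
  shows "finite (insert 1 (rad L n ` Bf \<union>
      (\<lambda>(S,S'). dist (ctr L n S) (ctr L n S') / 3) ` {(S,S'). S \<in> Bf \<and> S' \<in> Bf \<and> ctr L n S \<noteq> ctr L n S'}))"
proof -
  have "{(S,S'). S \<in> Bf \<and> S' \<in> Bf \<and> ctr L n S \<noteq> ctr L n S'} \<subseteq> Bf \<times> Bf" by blast
  hence "finite {(S,S'). S \<in> Bf \<and> S' \<in> Bf \<and> ctr L n S \<noteq> ctr L n S'}"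
    using assms finite_subset by blast
  thus ?thesis using assms by simp
qed

lemma (in luzin) rr_pos:
  assumes "good L Bf" shows "rr L n Bf > 0"
proof -
  have fin: "finite Bf" using assms unfolding good_def by blast
  have "\<forall>a\<in>insert 1 (rad L n ` Bf \<union>
      (\<lambda>(S,S'). dist (ctr L n S) (ctr L n S') / 3) ` {(S,S'). S \<in> Bf \<and> S' \<in> Bf \<and> ctr L n S \<noteq> ctr L n S'}). 0 < a"
    using assms rad_pos unfolding good_def by auto
  thus ?thesis unfolding rr_def using Min_gr_iff[OF rr_set_finite[OF fin]] by blast
qed

lemma rr_le_rad: "finite Bf \<Longrightarrow> S \<in> Bf \<Longrightarrow> rr L n Bf \<le> rad L n S"
  unfolding rr_def by (rule Min_le[OF rr_set_finite]) auto

lemma rr_le_dist: "finite Bf \<Longrightarrow> S \<in> Bf \<Longrightarrow> S' \<in> Bf \<Longrightarrow> ctr L n S \<noteq> ctr L n S'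
   \<Longrightarrow> rr L n Bf \<le> dist (ctr L n S) (ctr L n S') / 3"
  unfolding rr_def by (rule Min_le[OF rr_set_finite]) auto

lemma (in luzin) Iv_sub_cball:
  assumes "good L Bf" "S \<in> Bf"
  shows "Iv L n Bf S b \<subseteq> cball (ctr L n S) (rad L n S)"
proof -
  have r: "rr L n Bf \<le> rad L n S" "rr L n Bf > 0"
    using rr_le_rad assms rr_pos unfolding good_def by auto
  show ?thesis
    unfolding Iv_def using r by (auto simp: mem_cball dist_real_def)
qed

lemma (in luzin) qq_notin:
  assumes "good L Bf" "S \<in> Bf"
  shows "qq n \<notin> Iv L n Bf S b"
proof
  assume "qq n \<in> Iv L n Bf S b"
  hence "qq n \<in> cball (ctr L n S) (rad L n S)" using Iv_sub_cball[OF assms, of n b] by blast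
  hence "dist (ctr L n S) (qq n) \<le> rad L n S" by (simp add: mem_cball)
  moreover have "rad L n S < dist (ctr L n S) (qq n)"
    using pt_ex assms unfolding good_def ptP_def ctr_def rad_def by blast
  ultimately show False by simp
qed

lemma (in luzin) alice_legal:
  assumes "good L Bf"
  shows "BM_alice_legal (TT L) Bf (alice L n Bf b)"
  unfolding BM_alice_legal_def
proof (intro ballI conjI)
  fix S assume S: "S \<in> Bf"
  have r: "rr L n Bf > 0" using rr_pos assms by blast
  have oI: "open (Io L n Bf S b)" unfolding Io_def by simp
  show "openin (TT L) (alice L n Bf b S)" unfolding alice_def by (rule openin_TT_I[OF oI])
  have "Io L n Bf S b \<noteq> {}" unfolding Io_def using r by auto
  hence "L \<inter> Io L n Bf S b \<noteq> {}" using L_meets oI by blast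
  thus "alice L n Bf b S \<noteq> {}" unfolding alice_def by blast
  have "Io L n Bf S b \<subseteq> cball (ctr L n S) (rad L n S)"
    using Io_sub_Iv Iv_sub_cball[OF assms S] by blast
  moreover have "ee ` (cball (ctr L n S) (rad L n S) \<inter> L) \<subseteq> S"
    using pt_ex S assms unfolding good_def ptP_def ctr_def rad_def by blast
  ultimately show "alice L n Bf b S \<subseteq> S" unfolding alice_def by blast
qed

lemma (in luzin) Iv_disj:
  assumes "good L Bf" "S \<in> Bf" "S' \<in> Bf"
  shows "Iv L n Bf S True \<inter> Iv L n Bf S' False = {}"
proof (rule ccontr)
  assume "Iv L n Bf S True \<inter> Iv L n Bf S' False \<noteq> {}"
  then obtain y where y: "y \<in> Iv L n Bf S True" "y \<in> Iv L n Bf S' False" by blast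
  define c where "c = ctr L n S"
  define c' where "c' = ctr L n S'"
  define r where "r = rr L n Bf"
  have r: "r > 0" unfolding r_def using rr_pos assms(1) by blast
  have y1: "c + r/2 \<le> y" "y \<le> c + r" using y(1) unfolding Iv_def c_def r_def by auto
  have y2: "c' - r \<le> y" "y \<le> c' - r/2" using y(2) unfolding Iv_def c'_def r_def by auto
  show False
  proof (cases "c = c'")
    case True thus False using y1 y2 r by simp
  next
    case False
    hence "r \<le> dist c c' / 3" unfolding r_def c_def c'_def
      using rr_le_dist assms unfolding good_def by blast
    thus False using y1 y2 r False by (auto simp: dist_real_def)
  qed
qed



type_synonym amove = "real set set set \<Rightarrow> real set set set"
type_synonym bstrat = "real set set set \<Rightarrow> amove list \<Rightarrow> real set set set set"

primrec play :: "bstrat \<Rightarrow> real set \<Rightarrow> real set set set \<Rightarrow> nat set \<Rightarrow> nat \<Rightarrow> amove list" where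
  "play \<sigma> L A0 \<alpha> 0 = []"
| "play \<sigma> L A0 \<alpha> (Suc n) = play \<sigma> L A0 \<alpha> n @ [alice L n (\<sigma> A0 (play \<sigma> L A0 \<alpha> n)) (n \<in> \<alpha>)]"

definition fa :: "bstrat \<Rightarrow> real set \<Rightarrow> real set set set \<Rightarrow> nat set \<Rightarrow> nat \<Rightarrow> amove" where
  "fa \<sigma> L A0 \<alpha> n = alice L n (\<sigma> A0 (play \<sigma> L A0 \<alpha> n)) (n \<in> \<alpha>)"

lemma map_fa: "map (fa \<sigma> L A0 \<alpha>) [0..<n] = play \<sigma> L A0 \<alpha> n"
  by (induction n) (simp_all add: fa_def)

lemma play_cong: "(\<And>k. k < n \<Longrightarrow> (k \<in> \<alpha>) = (k \<in> \<beta>)) \<Longrightarrow> play \<sigma> L A0 \<alpha> n = play \<sigma> L A0 \<beta> n"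
  by (induction n) auto

lemma bob_legal_good: "BM_bob_legal (TT L) finite U Bf \<Longrightarrow> good L Bf"
  unfolding BM_bob_legal_def good_def by blast

lemma uncountable_natsets: "uncountable (UNIV :: nat set set)"
proof
  assume "countable (UNIV :: nat set set)"
  moreover have "(UNIV::real set) \<approx> (UNIV :: nat set set)"
    using nat_sets_eqpoll_reals by (rule eqpoll_sym)
  ultimately have "countable (UNIV::real set)" by (rule countable_eqpoll)
  thus False using uncountable_UNIV_real by simp
qed

lemma (in luzin) fin_lose: "\<not> BM_bob_winning_strategy (TT L) finite \<sigma>"
proof
  assume W: "BM_bob_winning_strategy (TT L) finite \<sigma>"
  define A0 where "A0 = ee ` (UNIV \<inter> L)"
  have A0o: "openin (TT L) A0" unfolding A0_def by (rule openin_TT_I) simp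
  have "L \<inter> UNIV \<noteq> {}" by (rule L_meets) auto
  hence A0ne: "A0 \<noteq> {}" unfolding A0_def by blast
  note WA = W[unfolded BM_bob_winning_strategy_def, rule_format, OF conjI[OF A0o A0ne]]
  define Bm where "Bm \<alpha> n = \<sigma> A0 (play \<sigma> L A0 \<alpha> n)" for \<alpha> n
  have mv: "BM_bob_move \<sigma> A0 (fa \<sigma> L A0 \<alpha>) n = Bm \<alpha> n" for \<alpha> n
    unfolding BM_bob_move_def Bm_def map_fa ..
  have fa_eq: "fa \<sigma> L A0 \<alpha> n = alice L n (Bm \<alpha> n) (n \<in> \<alpha>)" for \<alpha> n
    unfolding fa_def Bm_def ..
  have W0: "BM_bob_legal (TT L) finite A0 (Bm \<alpha> 0)" for \<alpha>
    using WA[of "fa \<sigma> L A0 \<alpha>", THEN conjunct1] unfolding mv .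
  have WS: "\<And>n. (\<forall>k\<le>n. BM_alice_legal (TT L) (Bm \<alpha> k) (fa \<sigma> L A0 \<alpha> k)) \<Longrightarrow>
              BM_bob_legal (TT L) finite (\<Union> (fa \<sigma> L A0 \<alpha> n ` Bm \<alpha> n)) (Bm \<alpha> (Suc n))" for \<alpha>
    using WA[of "fa \<sigma> L A0 \<alpha>", THEN conjunct2, THEN conjunct1] unfolding mv by blast
  have WW: "(\<forall>n. BM_alice_legal (TT L) (Bm \<alpha> n) (fa \<sigma> L A0 \<alpha> n)) \<Longrightarrow> (\<Inter>n. \<Union> (Bm \<alpha> n)) \<noteq> {}" for \<alpha>
    using WA[of "fa \<sigma> L A0 \<alpha>", THEN conjunct2, THEN conjunct2] unfolding mv by blast
  have goodB: "good L (Bm \<alpha> n)" for \<alpha> n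
  proof (induction n rule: less_induct)
    case (less n)
    show ?case
    proof (cases n)
      case 0 thus ?thesis using W0[of \<alpha>] bob_legal_good by simp
    next
      case (Suc m)
      have "\<forall>k\<le>m. BM_alice_legal (TT L) (Bm \<alpha> k) (fa \<sigma> L A0 \<alpha> k)"
      proof (intro allI impI)
        fix k assume "k \<le> m"
        hence "k < n" using Suc by simp
        hence "good L (Bm \<alpha> k)" by (rule less)
        thus "BM_alice_legal (TT L) (Bm \<alpha> k) (fa \<sigma> L A0 \<alpha> k)" unfolding fa_eq by (rule alice_legal)
      qed
      hence "BM_bob_legal (TT L) finite (\<Union> (fa \<sigma> L A0 \<alpha> m ` Bm \<alpha> m)) (Bm \<alpha> (Suc m))"
        by (rule WS)
      thus ?thesis using Suc bob_legal_good by simp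
    qed
  qed
  have AL: "BM_alice_legal (TT L) (Bm \<alpha> n) (fa \<sigma> L A0 \<alpha> n)" for \<alpha> n
    unfolding fa_eq using alice_legal goodB by blast
  have BL: "BM_bob_legal (TT L) finite (\<Union> (fa \<sigma> L A0 \<alpha> n ` Bm \<alpha> n)) (Bm \<alpha> (Suc n))" for \<alpha> n
    by (rule WS) (use AL in blast)
  have ne: "(\<Inter>n. \<Union> (Bm \<alpha> n)) \<noteq> {}" for \<alpha>
    by (rule WW) (use AL in blast)
  define y where "y \<alpha> = (SOME p. p \<in> (\<Inter>n. \<Union> (Bm \<alpha> n)))" for \<alpha>
  have y: "y \<alpha> \<in> \<Union> (Bm \<alpha> n)" for \<alpha> n
  proof -
    have ex: "\<exists>p. p \<in> (\<Inter>n. \<Union> (Bm \<alpha> n))" by (rule ex_in_conv[THEN iffD2, OF ne])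
    have "y \<alpha> \<in> (\<Inter>n. \<Union> (Bm \<alpha> n))" unfolding y_def by (rule someI_ex[OF ex])
    thus ?thesis by blast
  qed
  define zz where "zz \<alpha> = inv ee (y \<alpha>)" for \<alpha>
  have key: "\<exists>S\<in>Bm \<alpha> n. zz \<alpha> \<in> Io L n (Bm \<alpha> n) S (n \<in> \<alpha>) \<and> zz \<alpha> \<in> L" for \<alpha> n
  proof -
    obtain S' where S': "S' \<in> Bm \<alpha> (Suc n)" "y \<alpha> \<in> S'" using y[of \<alpha> "Suc n"] by blast
    have "S' \<subseteq> \<Union> (fa \<sigma> L A0 \<alpha> n ` Bm \<alpha> n)" using BL[of \<alpha> n] S'(1) unfolding BM_bob_legal_def by blast
    then obtain S where S: "S \<in> Bm \<alpha> n" "y \<alpha> \<in> fa \<sigma> L A0 \<alpha> n S" using S'(2) by blast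
    then obtain z where z: "z \<in> Io L n (Bm \<alpha> n) S (n \<in> \<alpha>)" "z \<in> L" "y \<alpha> = ee z"
      unfolding fa_eq alice_def by blast
    have "zz \<alpha> = z" unfolding zz_def z(3) using inv_f_f[OF inj_ee] by simp
    thus ?thesis using S(1) z by blast
  qed
  define G where "G n \<alpha> = (\<Union>S\<in>Bm \<alpha> n. Iv L n (Bm \<alpha> n) S (n \<in> \<alpha>))" for n \<alpha>
  define K where "K = (\<Inter>n. \<Union>(range (G n)))"
  have zG: "zz \<alpha> \<in> G n \<alpha>" for \<alpha> n
  proof -
    obtain S where S: "S \<in> Bm \<alpha> n" "zz \<alpha> \<in> Io L n (Bm \<alpha> n) S (n \<in> \<alpha>)" using key[of \<alpha> n] by blast
    have "zz \<alpha> \<in> Iv L n (Bm \<alpha> n) S (n \<in> \<alpha>)" using S(2) Io_sub_Iv by (rule subsetD[rotated])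
    thus ?thesis unfolding G_def using S(1) by (rule UN_I[rotated])
  qed
  have zL: "zz \<alpha> \<in> L" for \<alpha> using key[of \<alpha> 0] by blast
  have zK: "zz \<alpha> \<in> K \<inter> L" for \<alpha>
  proof
    show "zz \<alpha> \<in> L" by (rule zL)
    show "zz \<alpha> \<in> K" unfolding K_def
    proof (rule INT_I)
      fix n show "zz \<alpha> \<in> \<Union>(range (G n))" using zG[of \<alpha> n] by (rule UnionI[OF rangeI, rotated])
    qed
  qed
  have Gtr: "G n \<alpha> = G n (\<alpha> \<inter> {..n})" for n \<alpha>
  proof -
    have "play \<sigma> L A0 \<alpha> n = play \<sigma> L A0 (\<alpha> \<inter> {..n}) n" by (rule play_cong) auto
    hence "Bm \<alpha> n = Bm (\<alpha> \<inter> {..n}) n" unfolding Bm_def by simp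
    moreover have "(n \<in> \<alpha>) = (n \<in> \<alpha> \<inter> {..n})" by simp
    ultimately show ?thesis unfolding G_def by simp
  qed
  have finG: "finite (range (G n))" for n
  proof -
    have "range (G n) = (\<lambda>\<alpha>. G n (\<alpha> \<inter> {..n})) ` UNIV" by (intro image_cong refl) (rule Gtr)
    also have "\<dots> = G n ` ((\<lambda>\<alpha>. \<alpha> \<inter> {..n}) ` UNIV)" by (rule image_image[symmetric])
    finally have "range (G n) = G n ` ((\<lambda>\<alpha>. \<alpha> \<inter> {..n}) ` UNIV)" .
    moreover have "(\<lambda>\<alpha>. \<alpha> \<inter> {..n}) ` UNIV \<subseteq> Pow {..n}" by auto
    hence "finite ((\<lambda>\<alpha>. \<alpha> \<inter> {..n}) ` (UNIV :: nat set set))" by (rule finite_subset) simp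
    ultimately show ?thesis by (simp only: finite_imageI)
  qed
  have clG: "closed (G n \<alpha>)" for n \<alpha>
    unfolding G_def using goodB[of \<alpha> n] closed_Iv unfolding good_def by (intro closed_UN) auto
  have clK: "closed K" unfolding K_def
    using finG clG by (intro closed_INT ballI closed_Union) auto
  have qK: "qq n \<notin> \<Union>(range (G n))" for n
    using qq_notin goodB unfolding G_def by blast
  have intK: "interior K = {}"
  proof (rule ccontr)
    assume "interior K \<noteq> {}"
    then obtain p where p: "p \<in> interior K" by blast
    obtain e where e: "e > 0" "ball p e \<subseteq> interior K"
      using open_contains_ball[of "interior K"] p by blast
    obtain r where r: "r \<in> \<rat>" "p < r" "r < p + e" using Rats_dense_in_real[of p "p + e"] e(1) by auto
    have "r \<in> ball p e" using r by (simp add: dist_real_def)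
    hence "r \<in> K" using e(2) interior_subset by blast
    obtain n where "r = qq n" using r(1) range_qq by (metis rangeE)
    thus False using \<open>r \<in> K\<close> qK unfolding K_def by blast
  qed
  have injz: "inj zz"
  proof (rule injI, rule ccontr)
    fix \<alpha> \<beta> assume eq: "zz \<alpha> = zz \<beta>" and neq: "\<alpha> \<noteq> \<beta>"
    have "\<exists>n. (n \<in> \<alpha>) \<noteq> (n \<in> \<beta>)"
    proof (rule ccontr)
      assume "\<not> (\<exists>n. (n \<in> \<alpha>) \<noteq> (n \<in> \<beta>))"
      hence "\<alpha> = \<beta>" by auto
      thus False using neq by simp
    qed
    define n where "n = (LEAST n. (n \<in> \<alpha>) \<noteq> (n \<in> \<beta>))"
    have n: "(n \<in> \<alpha>) \<noteq> (n \<in> \<beta>)" unfolding n_def by (rule LeastI_ex) fact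
    have "(k \<in> \<alpha>) = (k \<in> \<beta>)" if "k < n" for k
      using not_less_Least[of k "\<lambda>n. (n \<in> \<alpha>) \<noteq> (n \<in> \<beta>)"] that unfolding n_def by blast
    hence "play \<sigma> L A0 \<alpha> n = play \<sigma> L A0 \<beta> n" by (rule play_cong)
    hence Bf: "Bm \<alpha> n = Bm \<beta> n" unfolding Bm_def by simp
    obtain S where S: "S \<in> Bm \<alpha> n" "zz \<alpha> \<in> Iv L n (Bm \<alpha> n) S (n \<in> \<alpha>)"
      using key[of \<alpha> n] Io_sub_Iv by blast
    obtain S' where S': "S' \<in> Bm \<alpha> n" "zz \<beta> \<in> Iv L n (Bm \<alpha> n) S' (n \<in> \<beta>)"
      using key[of \<beta> n] Io_sub_Iv unfolding Bf by blast
    show False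
    proof (cases "n \<in> \<alpha>")
      case True
      hence "n \<notin> \<beta>" using n by simp
      hence "zz \<beta> \<in> Iv L n (Bm \<alpha> n) S' False" using S'(2) by simp
      moreover have "zz \<alpha> \<in> Iv L n (Bm \<alpha> n) S True" using S(2) True by simp
      ultimately have "zz \<alpha> \<in> Iv L n (Bm \<alpha> n) S True \<inter> Iv L n (Bm \<alpha> n) S' False"
        using eq by (simp only: Int_iff)
      thus False unfolding Iv_disj[OF goodB[of \<alpha> n] S(1) S'(1), of n] by (rule emptyE)
    next
      case False
      hence "n \<in> \<beta>" using n by simp
      hence "zz \<beta> \<in> Iv L n (Bm \<alpha> n) S' True" using S'(2) by simp
      moreover have "zz \<alpha> \<in> Iv L n (Bm \<alpha> n) S False" using S(2) False by simp
      ultimately have "zz \<alpha> \<in> Iv L n (Bm \<alpha> n) S' True \<inter> Iv L n (Bm \<alpha> n) S False"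
        using eq by (simp only: Int_iff)
      thus False unfolding Iv_disj[OF goodB[of \<alpha> n] S'(1) S(1), of n] by (rule emptyE)
    qed
  qed
  have "countable (L \<inter> K)" using luz1[OF clK intK] .
  moreover have "range zz \<subseteq> L \<inter> K" using zK by blast
  ultimately have "countable (range zz)" by (rule countable_subset[rotated])
  hence "countable (UNIV :: nat set set)" using injz by (rule countable_image_inj_on)
  thus False using uncountable_natsets by simp
qed

theorem corollary4p15:
  assumes "continuum_hypothesis"
  shows "\<exists>X :: real set set topology. bob_wins_BM_omega X \<and> \<not> bob_wins_BM_fin X"
proof -
  from luzin_exists[OF assms] obtain L :: "real set"
    where L1: "\<forall>F. closed F \<and> interior F = {} \<longrightarrow> countable (L \<inter> F)"
      and L2: "\<forall>U. open U \<and> U \<noteq> {} \<longrightarrow> uncountable (L \<inter> U)"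
    by (elim exE conjE)
  have LZ: "luzin L"
  proof
    fix F :: "real set" assume "closed F" "interior F = {}"
    thus "countable (L \<inter> F)" using L1 by simp
  next
    fix U :: "real set" assume "open U" "U \<noteq> {}"
    thus "uncountable (L \<inter> U)" using L2 by simp
  qed
  have om: "bob_wins_BM_omega (TT L)"
    unfolding BM_bob_has_winning_strategy_def by (rule exI[of _ "sigw L"]) (rule luzin.omega_win[OF LZ])
  have fi: "\<not> bob_wins_BM_fin (TT L)"
    unfolding BM_bob_has_winning_strategy_def
  proof
    assume "\<exists>\<sigma>. BM_bob_winning_strategy (TT L) finite \<sigma>"
    then obtain \<sigma> where "BM_bob_winning_strategy (TT L) finite \<sigma>" by (elim exE)
    thus False using luzin.fin_lose[OF LZ, of \<sigma>] by (elim notE)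
  qed
  show ?thesis by (rule exI[of _ "TT L"]) (rule conjI[OF om fi])
qed

end
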